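(* Let $m\ge 2$ and let $\Gamma$ be a strongly regular graph with smallest adjacency eigenvalue $-m$ which is not sporadic, i.e. $\Gamma$ is one of: (i) a complete multipartite graph $K_{a\times m}$ with $a\ge 2$ parts of size $m$; (ii) a Latin square graph $LS_m(n)$; (iii) the block graph of a Steiner system $S(2,m,mn+m-n)$. Then $E(\Gamma)=E(\bar\Gamma)$ if and only if $\Gamma\cong K_{m\times m}$ (imprimitive case) or $\Gamma$ is a Latin square graph $LS_m(n)$ for some $n\ge 2$ (primitive case).
   Context: A strongly regular graph with parameters $(n,k,e,d)$ is a $k$-regular simple graph on $n$ vertices, neither complete nor edgeless, in which adjacent vertices have $e$ common neighbours and distinct non-adjacent vertices have $d$ common neighbours. The Latin square graph $LS_m(n)$ is the graph of an orthogonal array $OA(n,m)$ (an $m\times n^2$ array over an $n$-set in which every pair of rows contains each ordered pair of symbols exactly once): vertices are the $n^2$ columns, two being adjacent iff they agree in exactly one row; it is strongly regular with parameters $(n^2, m(n-1), (m-1)(m-2)+n-2, m(m-1))$. The block graph of a Steiner system $S(2,m,v)$ has the blocks as vertices, two blocks adjacent iff they intersect. The energy $E(\Gamma)$ is the sum of the absolute values of the adjacency eigenvalues (with multiplicity); $\bar\Gamma$ is the complement. *)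

theory Defs
  imports "Jordan_Normal_Form.Char_Poly"
begin

definition simple_graph_on :: "'b set \<Rightarrow> ('b \<Rightarrow> 'b \<Rightarrow> bool) \<Rightarrow> bool" where
  "simple_graph_on V E \<longleftrightarrow> finite V \<and>
     (\<forall>x y. E x y \<longrightarrow> x \<in> V \<and> y \<in> V) \<and>
     (\<forall>x y. E x y \<longrightarrow> E y x) \<and> (\<forall>x. \<not> E x x)"

definition complement_graph :: "'b set \<Rightarrow> ('b \<Rightarrow> 'b \<Rightarrow> bool) \<Rightarrow> 'b \<Rightarrow> 'b \<Rightarrow> bool" where
  "complement_graph V E x y \<longleftrightarrow> x \<in> V \<and> y \<in> V \<and> x \<noteq> y \<and> \<not> E x y"

definition strongly_regular ::
  "'b set \<Rightarrow> ('b \<Rightarrow> 'b \<Rightarrow> bool) \<Rightarrow> nat \<Rightarrow> nat \<Rightarrow> nat \<Rightarrow> nat \<Rightarrow> bool" where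
  "strongly_regular V E n k e d \<longleftrightarrow> simple_graph_on V E \<and> card V = n \<and>
     (\<exists>x\<in>V. \<exists>y\<in>V. x \<noteq> y \<and> \<not> E x y) \<and>  \<comment> \<open>not complete\<close>
     (\<exists>x y. E x y) \<and>                         \<comment> \<open>not edgeless\<close>
     (\<forall>x\<in>V. card {z\<in>V. E x z} = k) \<and>
     (\<forall>x\<in>V. \<forall>y\<in>V. E x y \<longrightarrow> card {z\<in>V. E x z \<and> E y z} = e) \<and>
     (\<forall>x\<in>V. \<forall>y\<in>V. x \<noteq> y \<longrightarrow> \<not> E x y \<longrightarrow> card {z\<in>V. E x z \<and> E y z} = d)"

definition is_srg :: "'b set \<Rightarrow> ('b \<Rightarrow> 'b \<Rightarrow> bool) \<Rightarrow> bool" where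
  "is_srg V E \<longleftrightarrow> (\<exists>n k e d. strongly_regular V E n k e d)"

definition graph_iso ::
  "'b set \<Rightarrow> ('b \<Rightarrow> 'b \<Rightarrow> bool) \<Rightarrow> 'c set \<Rightarrow> ('c \<Rightarrow> 'c \<Rightarrow> bool) \<Rightarrow> bool" where
  "graph_iso V E W F \<longleftrightarrow> (\<exists>f. bij_betw f V W \<and>
     (\<forall>x\<in>V. \<forall>y\<in>V. E x y \<longleftrightarrow> F (f x) (f y)))"

definition adj_matrix :: "nat \<Rightarrow> (nat \<Rightarrow> nat \<Rightarrow> bool) \<Rightarrow> real mat" where
  "adj_matrix N E = mat N N (\<lambda>(i, j). if E i j then 1 else 0)"

text \<open>The adjacency matrix is real symmetric, so its characteristic polynomial
  splits over the reals; multiplicities are root orders.\<close>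

definition adj_eigenvalues :: "nat \<Rightarrow> (nat \<Rightarrow> nat \<Rightarrow> bool) \<Rightarrow> real set" where
  "adj_eigenvalues N E = {x. poly (char_poly (adj_matrix N E)) x = 0}"

definition smallest_eigenvalue :: "nat \<Rightarrow> (nat \<Rightarrow> nat \<Rightarrow> bool) \<Rightarrow> real" where
  "smallest_eigenvalue N E = Min (adj_eigenvalues N E)"

definition energy :: "nat \<Rightarrow> (nat \<Rightarrow> nat \<Rightarrow> bool) \<Rightarrow> real" where
  "energy N E = (\<Sum>x\<in>adj_eigenvalues N E.
      real (order x (char_poly (adj_matrix N E))) * \<bar>x\<bar>)"

definition multipartite_V :: "nat \<Rightarrow> nat \<Rightarrow> (nat \<times> nat) set" where
  "multipartite_V a m = {0..<a} \<times> {0..<m}"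

definition multipartite_E :: "nat \<Rightarrow> nat \<Rightarrow> nat \<times> nat \<Rightarrow> nat \<times> nat \<Rightarrow> bool" where
  "multipartite_E a m u v \<longleftrightarrow> u \<in> multipartite_V a m \<and> v \<in> multipartite_V a m \<and> fst u \<noteq> fst v"

definition orthogonal_array :: "nat \<Rightarrow> nat \<Rightarrow> (nat \<Rightarrow> nat \<Rightarrow> nat) \<Rightarrow> bool" where
  "orthogonal_array n m A \<longleftrightarrow>
     (\<forall>i<m. \<forall>c<n^2. A i c < n) \<and>
     (\<forall>i<m. \<forall>j<m. i \<noteq> j \<longrightarrow> (\<forall>s<n. \<forall>t<n.
        card {c. c < n^2 \<and> A i c = s \<and> A j c = t} = 1))"

definition LS_V :: "nat \<Rightarrow> nat set" where
  "LS_V n = {0..<n^2}"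

definition LS_E :: "nat \<Rightarrow> nat \<Rightarrow> (nat \<Rightarrow> nat \<Rightarrow> nat) \<Rightarrow> nat \<Rightarrow> nat \<Rightarrow> bool" where
  "LS_E n m A c c' \<longleftrightarrow> c \<in> LS_V n \<and> c' \<in> LS_V n \<and> c \<noteq> c' \<and>
     card {i. i < m \<and> A i c = A i c'} = 1"

definition steiner_2 :: "nat \<Rightarrow> nat \<Rightarrow> nat set set \<Rightarrow> bool" where
  "steiner_2 m v B \<longleftrightarrow>
     (\<forall>b\<in>B. b \<subseteq> {0..<v} \<and> card b = m) \<and>
     (\<forall>x<v. \<forall>y<v. x \<noteq> y \<longrightarrow> card {b\<in>B. x \<in> b \<and> y \<in> b} = 1)"

definition block_graph_E :: "nat set set \<Rightarrow> nat set \<Rightarrow> nat set \<Rightarrow> bool" where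
  "block_graph_E B b b' \<longleftrightarrow> b \<in> B \<and> b' \<in> B \<and> b \<noteq> b' \<and> b \<inter> b' \<noteq> {}"

end

theory Submission imports Defs "Jordan_Normal_Form.Schur_Decomposition" begin

lemma char_poly_real_of_complex:
  fixes M :: "real mat"
  assumes M: "M \<in> carrier_mat N N"
  and c: "char_poly (map_mat complex_of_real M) = (\<Prod>a\<leftarrow>map complex_of_real as. [:-a,1:])"
  shows "char_poly M = (\<Prod>a\<leftarrow>as. [:-a,1:])"
proof -
  interpret r: map_poly_inj_comm_ring_hom "complex_of_real" ..
  have "map_poly complex_of_real (char_poly M) = char_poly (map_mat complex_of_real M)"
    by (rule of_real_hom.char_poly_hom[OF M, symmetric])
  also have "\<dots> = map_poly complex_of_real (\<Prod>a\<leftarrow>as. [:-a,1:])"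
    unfolding c r.hom_prod_list by (simp add: o_def)
  finally show ?thesis by simp
qed

definition mtrace :: "'a::comm_ring_1 mat \<Rightarrow> 'a" where
  "mtrace A = (\<Sum>i<dim_row A. A $$ (i,i))"

lemma mtrace_comm:
  assumes X: "X \<in> carrier_mat n m" and Y: "Y \<in> carrier_mat m n"
  shows "mtrace (X * Y) = mtrace (Y * X)"
proof -
  have "mtrace (X * Y) = (\<Sum>i<n. \<Sum>l<m. X $$ (i,l) * Y $$ (l,i))"
    using X Y unfolding mtrace_def by (auto simp: scalar_prod_def atLeast0LessThan)
  also have "\<dots> = (\<Sum>l<m. \<Sum>i<n. Y $$ (l,i) * X $$ (i,l))"
    by (subst sum.swap) (simp add: mult.commute)
  also have "\<dots> = mtrace (Y * X)"
    using X Y unfolding mtrace_def by (auto simp: scalar_prod_def atLeast0LessThan)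
  finally show ?thesis .
qed

lemma similar_mtrace:
  assumes A: "A \<in> carrier_mat n n" and w: "similar_mat_wit A B P Q"
  shows "mtrace A = mtrace B" "mtrace (A * A) = mtrace (B * B)"
proof -
  from similar_mat_witD2[OF A w] have B: "B \<in> carrier_mat n n" and P: "P \<in> carrier_mat n n"
    and Q: "Q \<in> carrier_mat n n" and PQ: "P * Q = 1\<^sub>m n" and QP: "Q * P = 1\<^sub>m n"
    and AA: "A = P * B * Q" by auto
  have gen: "mtrace (P * X * Q) = mtrace X" if X: "X \<in> carrier_mat n n" for X
  proof -
    have "mtrace (P * X * Q) = mtrace (Q * (P * X))"
      by (rule mtrace_comm, insert P Q X, auto)
    also have "Q * (P * X) = X" using P Q X QP
      by (metis assoc_mult_mat left_mult_one_mat)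
    finally show ?thesis .
  qed
  show "mtrace A = mtrace B" using gen[OF B] AA by simp
  have "A * A = P * (B * B) * Q"
    using similar_mat_wit_pow_id[OF w, of 2] A B
    by (simp add: numeral_2_eq_2)
  then show "mtrace (A * A) = mtrace (B * B)" using gen[of "B*B"] B by simp
qed

lemma ut_mtrace:
  assumes T: "T \<in> carrier_mat n n" and ut: "upper_triangular T"
  shows "mtrace T = sum_list (diag_mat T)"
    "mtrace (T * T) = sum_list (map (\<lambda>x. x^2) (diag_mat T))"
proof -
  show "mtrace T = sum_list (diag_mat T)"
    using T unfolding mtrace_def diag_mat_def by (simp add: sum_list_sum_nth atLeast0LessThan)
  have "(T * T) $$ (i,i) = T $$ (i,i) ^ 2" if i: "i < n" for i
  proof -
    have "(T * T) $$ (i,i) = (\<Sum>l\<in>{0..<n}. T $$ (i,l) * T $$ (l,i))"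
      using T i by (simp add: scalar_prod_def)
    also have "\<dots> = (\<Sum>l\<in>{i}. T $$ (i,l) * T $$ (l,i))"
    proof (rule sum.mono_neutral_right)
      show "\<forall>l\<in>{0..<n} - {i}. T $$ (i,l) * T $$ (l,i) = 0"
      proof
        fix l assume l: "l \<in> {0..<n} - {i}"
        show "T $$ (i,l) * T $$ (l,i) = 0"
        proof (cases "l < i")
          case True then show ?thesis using ut T i unfolding upper_triangular_def by auto
        next
          case False then have "i < l" using l by auto
          then show ?thesis using ut T l unfolding upper_triangular_def by auto
        qed
      qed
    qed (use i in auto)
    finally show ?thesis by (simp add: power2_eq_square)
  qed
  then show "mtrace (T * T) = sum_list (map (\<lambda>x. x^2) (diag_mat T))"
    using T unfolding mtrace_def diag_mat_def by (simp add: sum_list_sum_nth atLeast0LessThan)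
qed

lemma eig_root:
  fixes C :: "complex mat" and \<alpha> \<beta> \<gamma> \<kappa> a :: complex
  assumes C: "C \<in> carrier_mat N N"
  and sq: "\<And>i j. i<N \<Longrightarrow> j<N \<Longrightarrow> (C*C)$$(i,j) = (if i=j then \<alpha> else 0) + \<beta> * C$$(i,j) + \<gamma>"
  and cols: "\<And>j. j<N \<Longrightarrow> (\<Sum>i<N. C$$(i,j)) = \<kappa>"
  and ev: "eigenvalue C a"
  shows "a = \<kappa> \<or> a^2 - \<beta>*a - \<alpha> = 0"
proof -
  from ev obtain v where v: "v \<in> carrier_vec N" and v0: "v \<noteq> 0\<^sub>v N" and Cv: "C *\<^sub>v v = a \<cdot>\<^sub>v v"
    unfolding eigenvalue_def eigenvector_def using C by auto
  define \<sigma> where "\<sigma> = (\<Sum>j<N. v $ j)"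
  have Cvi: "(C *\<^sub>v v) $ i = (\<Sum>j<N. C $$ (i,j) * v $ j)" if "i < N" for i
    using C v that by (auto simp: scalar_prod_def atLeast0LessThan)
  have Cvi': "(\<Sum>j<N. C $$ (i,j) * v $ j) = a * v $ i" if "i < N" for i
    using Cvi[OF that] Cv that v by auto
  have CCv: "(C * C) *\<^sub>v v = (a^2) \<cdot>\<^sub>v v"
    using C v Cv by (simp add: mult_mat_vec power2_eq_square smult_smult_assoc)
  have eq1: "a^2 * v $ i = \<alpha> * v $ i + \<beta> * (a * v $ i) + \<gamma> * \<sigma>" if i: "i < N" for i
  proof -
    have "a^2 * v $ i = ((C * C) *\<^sub>v v) $ i" using CCv i v by auto
    also have "\<dots> = (\<Sum>j<N. (C*C) $$ (i,j) * v $ j)"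
      using C v i by (auto simp del: assoc_mult_mat_vec simp: scalar_prod_def atLeast0LessThan)
    also have "\<dots> = (\<Sum>j<N. (if i=j then \<alpha> * v $ j else 0) + \<beta> * (C $$ (i,j) * v $ j) + \<gamma> * v $ j)"
      by (rule sum.cong) (auto simp: sq i algebra_simps)
    also have "\<dots> = \<alpha> * v $ i + \<beta> * (\<Sum>j<N. C $$ (i,j) * v $ j) + \<gamma> * \<sigma>"
      using i by (simp add: sum.distrib sum_distrib_left \<sigma>_def)
    finally show ?thesis using Cvi'[OF i] by simp
  qed
  have "(\<Sum>i<N. \<Sum>j<N. C $$ (i,j) * v $ j) = (\<Sum>j<N. (\<Sum>i<N. C $$ (i,j)) * v $ j)"
    by (subst sum.swap) (simp add: sum_distrib_right)
  also have "\<dots> = \<kappa> * \<sigma>" using cols by (simp add: \<sigma>_def sum_distrib_left)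
  finally have "(\<Sum>i<N. a * v $ i) = \<kappa> * \<sigma>" using Cvi' by simp
  then have "a * \<sigma> = \<kappa> * \<sigma>" by (simp add: \<sigma>_def sum_distrib_left)
  then have ks: "(a - \<kappa>) * \<sigma> = 0" by (simp add: algebra_simps)
  show ?thesis
  proof (cases "a = \<kappa>")
    case True then show ?thesis by simp
  next
    case False
    with ks have s0: "\<sigma> = 0" by simp
    from v0 v obtain i where i: "i < N" and vi: "v $ i \<noteq> 0"
      by (metis carrier_vecD eq_vecI index_zero_vec(1) index_zero_vec(2))
    from eq1[OF i] s0 have "(a^2 - \<beta>*a - \<alpha>) * v $ i = 0" by (simp add: algebra_simps)
    with vi show ?thesis by simp
  qed
qed

lemma of_real_sum_list': "(of_real (sum_list xs) :: complex) = sum_list (map of_real xs)"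
  by (induction xs) auto

lemma complex_quadratic_real:
  fixes a :: complex and \<alpha> \<beta> :: real
  assumes disc: "\<beta>^2 + 4*\<alpha> \<ge> 0" and q: "a^2 - of_real \<beta> * a - of_real \<alpha> = 0"
  shows "a = of_real (Re a) \<and> (Re a)^2 - \<beta> * Re a - \<alpha> = 0"
proof -
  define D where "D = sqrt (\<beta>^2 + 4*\<alpha>)"
  have D2: "D^2 = \<beta>^2 + 4*\<alpha>" using disc by (simp add: D_def)
  define r1 where "r1 = (\<beta> + D)/2"
  define r2 where "r2 = (\<beta> - D)/2"
  have sum: "r1 + r2 = \<beta>" by (simp add: r1_def r2_def field_simps)
  have prod: "r1 * r2 = - \<alpha>" using D2 by (simp add: r1_def r2_def field_simps power2_eq_square)
  have "(a - of_real r1) * (a - of_real r2) = a^2 - of_real (r1 + r2) * a + of_real (r1 * r2)"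
    by (simp add: algebra_simps power2_eq_square)
  also have "\<dots> = a^2 - of_real \<beta> * a - of_real \<alpha>" by (simp add: sum prod)
  finally have "(a - of_real r1) * (a - of_real r2) = 0" using q by simp
  then have "a = of_real r1 \<or> a = of_real r2" by simp
  moreover have "r1^2 - \<beta>*r1 - \<alpha> = 0" "r2^2 - \<beta>*r2 - \<alpha> = 0"
    unfolding r1_def r2_def using D2 by (simp_all add: power2_eq_square field_simps; simp add: algebra_simps)+
  ultimately show ?thesis by auto
qed

lemma spectral:
  fixes M :: "real mat" and \<alpha> \<beta> \<gamma> \<kappa> :: real
  assumes M: "M \<in> carrier_mat N N"
  and sq: "\<And>i j. i<N \<Longrightarrow> j<N \<Longrightarrow> (M*M)$$(i,j) = (if i=j then \<alpha> else 0) + \<beta> * M$$(i,j) + \<gamma>"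
  and cols: "\<And>j. j<N \<Longrightarrow> (\<Sum>i<N. M$$(i,j)) = \<kappa>"
  and diag: "\<And>i. i<N \<Longrightarrow> M$$(i,i) = 0"
  and disc: "\<beta>^2 + 4*\<alpha> \<ge> 0"
  shows "\<exists>as. char_poly M = (\<Prod>a\<leftarrow>as. [:-a,1:]) \<and> length as = N \<and>
     (\<forall>a\<in>set as. a = \<kappa> \<or> a^2 - \<beta>*a - \<alpha> = 0) \<and> sum_list as = 0 \<and>
     sum_list (map (\<lambda>a. a^2) as) = N*(\<alpha>+\<gamma>)"
proof -
  define C where "C = map_mat complex_of_real M"
  have C: "C \<in> carrier_mat N N" using M by (simp add: C_def)
  have CC: "C * C = map_mat complex_of_real (M * M)"
    unfolding C_def by (rule of_real_hom.mat_hom_mult[OF M M, symmetric])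
  have Cij: "C $$ (i,j) = of_real (M $$ (i,j))" if "i<N" "j<N" for i j
    using M that by (simp add: C_def)
  have CCij: "(C*C) $$ (i,j) = of_real ((M*M) $$ (i,j))" if "i<N" "j<N" for i j
    using M that unfolding CC by simp
  from char_poly_factorized[OF C] obtain asc where cp: "char_poly C = (\<Prod>a\<leftarrow>asc. [:-a,1:])"
    and len: "length asc = N" by blast
  obtain T P Q where sd: "schur_decomposition C asc = (T,P,Q)" by (cases "schur_decomposition C asc") auto
  from schur_decomposition[OF C cp sd] have w: "similar_mat_wit C T P Q"
    and ut: "upper_triangular T" and dT: "diag_mat T = asc" by auto
  from similar_mat_witD2[OF C w] have T: "T \<in> carrier_mat N N" by auto
  have roots: "a = of_real (Re a) \<and> (Re a = \<kappa> \<or> (Re a)^2 - \<beta> * Re a - \<alpha> = 0)" if a: "a \<in> set asc" for a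
  proof -
    have "poly (char_poly C) a = 0" unfolding cp using a
      by (simp add: poly_prod_list prod_list_zero_iff)
    then have "eigenvalue C a" using eigenvalue_root_char_poly[OF C] by simp
    have h1: "(C*C)$$(i,j) = (if i=j then of_real \<alpha> else 0) + of_real \<beta> * C$$(i,j) + of_real \<gamma>"
      if "i<N" "j<N" for i j using that by (simp add: CCij Cij sq)
    have h2: "(\<Sum>i<N. C$$(i,j)) = of_real \<kappa>" if "j<N" for j
      using that cols[OF that] by (simp add: Cij flip: of_real_sum)
    from eig_root[OF C h1 h2 \<open>eigenvalue C a\<close>]
    have "a = of_real \<kappa> \<or> a^2 - of_real \<beta> * a - of_real \<alpha> = 0" .
    then show ?thesis
    proof
      assume "a = of_real \<kappa>" then show ?thesis by simp
    next
      assume "a^2 - of_real \<beta> * a - of_real \<alpha> = 0"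
      from complex_quadratic_real[OF disc this] show ?thesis by simp
    qed
  qed
  define as where "as = map Re asc"
  have asc: "asc = map complex_of_real as"
    unfolding as_def
  proof (rule nth_equalityI)
    fix i assume "i < length asc"
    then have "asc ! i \<in> set asc" by simp
    from roots[OF this] show "asc ! i = map complex_of_real (map Re asc) ! i" using \<open>i < length asc\<close> by simp
  qed simp
  have cpM: "char_poly M = (\<Prod>a\<leftarrow>as. [:-a,1:])"
    by (rule char_poly_real_of_complex[OF M]) (use cp asc C_def in simp)
  have tr1: "mtrace C = 0" using C diag unfolding mtrace_def by (simp add: Cij)
  have tr2: "mtrace (C*C) = of_nat N * of_real (\<alpha>+\<gamma>)"
  proof -
    have "mtrace (C*C) = (\<Sum>i<N. (C*C) $$ (i,i))" using C unfolding mtrace_def by simp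
    also have "\<dots> = (\<Sum>i<N. of_real (\<alpha>+\<gamma>))"
      by (rule sum.cong) (simp_all add: CCij sq diag)
    finally show ?thesis by simp
  qed
  have s1: "sum_list asc = 0"
    using similar_mtrace(1)[OF C w] ut_mtrace(1)[OF T ut] tr1 dT by simp
  have s2: "sum_list (map (\<lambda>x. x^2) asc) = of_nat N * of_real (\<alpha>+\<gamma>)"
    using similar_mtrace(2)[OF C w] ut_mtrace(2)[OF T ut] tr2 dT by simp
  have "of_real (sum_list as) = (0::complex)" using s1 unfolding asc of_real_sum_list' by simp
  then have r1: "sum_list as = 0" by simp
  have r2: "sum_list (map (\<lambda>a. a^2) as) = N*(\<alpha>+\<gamma>)"
  proof -
    have "of_real (sum_list (map (\<lambda>a. a^2) as)) = (of_nat N * of_real (\<alpha>+\<gamma>) :: complex)"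
      using s2 unfolding asc of_real_sum_list' map_map o_def of_real_power .
    also have "\<dots> = of_real (of_nat N * (\<alpha>+\<gamma>))" by simp
    finally show ?thesis by (simp only: of_real_eq_iff)
  qed
  have r3: "\<forall>a\<in>set as. a = \<kappa> \<or> a^2 - \<beta>*a - \<alpha> = 0"
  proof
    fix a assume "a \<in> set as"
    then obtain b where "b \<in> set asc" "a = Re b" unfolding as_def by auto
    then show "a = \<kappa> \<or> a^2 - \<beta>*a - \<alpha> = 0" using roots by blast
  qed
  have r4: "length as = N" using len by (simp add: as_def)
  show ?thesis using cpM r1 r2 r3 r4 by blast
qed

lemma order_prod_linear:
  fixes as :: "real list"
  shows "Polynomial.order x (\<Prod>a\<leftarrow>as. [:-a,1:]) = count_list as x"
proof (induction as)
  case Nil then show ?case by (simp add: order_0I)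
next
  case (Cons a as)
  have nz: "(\<Prod>a\<leftarrow>as. [:-a,1:]) \<noteq> (0 :: real poly)"
    unfolding prod_list_zero_iff by auto
  have "[:-a,1:] * (\<Prod>a\<leftarrow>as. [:-a,1:]) \<noteq> 0" using nz by (intro no_zero_divisors) auto
  then have "Polynomial.order x ([:-a,1:] * (\<Prod>a\<leftarrow>as. [:-a,1:])) = Polynomial.order x [:-a,1:] + Polynomial.order x (\<Prod>a\<leftarrow>as. [:-a,1:])"
    by (rule Polynomial.order_mult)
  then show ?case using Cons by (simp add: order_linear')
qed

lemma poly_prod_linear_zero:
  "poly (\<Prod>a\<leftarrow>as. [:-a,1:]) x = (0::real) \<longleftrightarrow> x \<in> set as"
  by (induction as) auto

lemma sum_list_count_real_gen:
  fixes f :: "'a \<Rightarrow> real"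
  assumes "finite X" "set xs \<subseteq> X"
  shows "sum_list (map f xs) = (\<Sum>x\<in>X. real (count_list xs x) * f x)"
  using assms(2)
proof (induction xs)
  case Nil then show ?case by simp
next
  case (Cons a xs)
  then have aX: "a \<in> X" and IH: "sum_list (map f xs) = (\<Sum>x\<in>X. real (count_list xs x) * f x)" by auto
  have "(\<Sum>x\<in>X. real (count_list (a#xs) x) * f x) = (\<Sum>x\<in>X. real (count_list xs x) * f x + (if a = x then f x else 0))"
    by (rule sum.cong) (auto simp: algebra_simps)
  also have "\<dots> = sum_list (map f xs) + f a" using aX assms(1) by (simp add: sum.distrib IH)
  finally show ?case by simp
qed

lemma energy_from_factor:
  assumes "char_poly (adj_matrix N E) = (\<Prod>a\<leftarrow>as. [:-a,1:])"
  shows "adj_eigenvalues N E = set as" "energy N E = sum_list (map abs as)"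
proof -
  show "adj_eigenvalues N E = set as"
    unfolding adj_eigenvalues_def assms poly_prod_linear_zero by auto
  show "energy N E = sum_list (map abs as)"
    unfolding energy_def assms adj_eigenvalues_def poly_prod_linear_zero order_prod_linear Collect_mem_eq
    by (rule sum_list_count_real_gen[symmetric]) auto
qed

lemma sum_list_quad_aux:
  fixes as :: "real list"
  shows "sum_list (map (\<lambda>a. a - c*((a-\<kappa>)*(a-r))) as) =
    sum_list as - c*(sum_list (map (\<lambda>a. a^2) as) - (\<kappa>+r)*sum_list as + \<kappa>*r*length as)"
  by (induction as) (simp_all add: algebra_simps power2_eq_square)

lemma energy_alg:
  fixes as :: "real list" and \<kappa> r s :: real
  assumes vals: "\<forall>a\<in>set as. a = \<kappa> \<or> a = r \<or> a = s"
  and k0: "\<kappa> \<ge> 0" and r0: "r \<ge> 0" and s0: "s < 0"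
  and s1: "sum_list as = 0" and s2: "sum_list (map (\<lambda>a. a^2) as) = N * \<kappa>"
  and len: "length as = N"
  shows "sum_list (map abs as) = - 2 * s * (N * \<kappa> * (1 + r)) / ((s-\<kappa>)*(s-r))"
proof -
  define c where "c = 2 * s / ((s-\<kappa>)*(s-r))"
  have nz: "(s-\<kappa>)*(s-r) \<noteq> 0" using k0 r0 s0 by auto
  have m: "map abs as = map (\<lambda>a. a - c*((a-\<kappa>)*(a-r))) as"
  proof (rule map_cong[OF refl])
    fix a assume "a \<in> set as"
    with vals have "a = \<kappa> \<or> a = r \<or> a = s" by auto
    then show "\<bar>a\<bar> = a - c*((a-\<kappa>)*(a-r))"
      using k0 r0 s0 nz unfolding c_def by (auto simp: field_simps)
  qed
  have "sum_list (map abs as) = 0 - c * (N*\<kappa> - 0 + \<kappa>*r*N)"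
    unfolding m sum_list_quad_aux s1 s2 len by simp
  also have "N*\<kappa> - 0 + \<kappa>*r*N = N * \<kappa> * (1 + r)" by (simp add: algebra_simps)
  also have "0 - c * (N * \<kappa> * (1 + r)) = - 2 * s * (N * \<kappa> * (1 + r)) / ((s-\<kappa>)*(s-r))"
    unfolding c_def by simp
  finally show ?thesis .
qed

lemma sum_indicator_card:
  fixes N :: nat
  shows "(\<Sum>l<N. (if P l then 1 else 0) :: real) = real (card {l. l < N \<and> P l})"
proof -
  have "(\<Sum>l<N. (if P l then 1 else 0) :: real) = (\<Sum>l\<in>{l\<in>{..<N}. P l}. 1)"
    by (rule sum.inter_filter[symmetric]) simp
  also have "{l\<in>{..<N}. P l} = {l. l < N \<and> P l}" by auto
  finally show ?thesis by simp
qed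

lemma sum_skip:
  fixes f :: "nat \<Rightarrow> real"
  assumes "i < N"
  shows "(\<Sum>l<N. (if i = l then 0 else 1) * f l) = (\<Sum>l<N. f l) - f i"
proof -
  have "(\<Sum>l<N. (if i = l then 0 else 1) * f l) = (\<Sum>l<N. f l - (if i = l then f l else 0))"
    by (rule sum.cong) auto
  also have "\<dots> = (\<Sum>l<N. f l) - f i" using assms by (simp add: sum_subtractf)
  finally show ?thesis .
qed

lemma complement_sq:
  fixes M B :: "real mat"
  assumes M: "M \<in> carrier_mat N N" and B: "B \<in> carrier_mat N N"
  and Bij: "\<And>i j. i<N \<Longrightarrow> j<N \<Longrightarrow> B$$(i,j) = (if i=j then 0 else 1) - M$$(i,j)"
  and sq: "\<And>i j. i<N \<Longrightarrow> j<N \<Longrightarrow> (M*M)$$(i,j) = (if i=j then \<alpha> else 0) + \<beta> * M$$(i,j) + \<gamma>"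
  and rows: "\<And>i. i<N \<Longrightarrow> (\<Sum>j<N. M$$(i,j)) = \<kappa>"
  and cols: "\<And>j. j<N \<Longrightarrow> (\<Sum>i<N. M$$(i,j)) = \<kappa>"
  and diag: "\<And>i. i<N \<Longrightarrow> M$$(i,i) = 0"
  and i: "i < N" and j: "j < N"
  shows "(B*B)$$(i,j) = (if i=j then \<alpha> - \<beta> - 1 else 0) + (-(2+\<beta>)) * B$$(i,j) + (N - 2*\<kappa> + \<gamma> + \<beta>)"
proof -
  let ?d = "\<lambda>i l. (if i = l then 0 else 1) :: real"
  have "(B*B)$$(i,j) = (\<Sum>l<N. B$$(i,l) * B$$(l,j))"
    using B i j by (simp add: scalar_prod_def atLeast0LessThan)
  also have "\<dots> = (\<Sum>l<N. ?d i l * ?d l j - ?d i l * M$$(l,j) - ?d l j * M$$(i,l) + M$$(i,l) * M$$(l,j))"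
    by (rule sum.cong) (auto simp: Bij i j algebra_simps)
  also have "\<dots> = (\<Sum>l<N. ?d i l * ?d l j) - (\<Sum>l<N. ?d i l * M$$(l,j)) - (\<Sum>l<N. ?d j l * M$$(i,l))
      + (\<Sum>l<N. M$$(i,l) * M$$(l,j))"
    by (simp add: sum.distrib sum_subtractf eq_commute[of j])
  also have "(\<Sum>l<N. ?d i l * M$$(l,j)) = \<kappa> - M$$(i,j)" using sum_skip[OF i, of "\<lambda>l. M$$(l,j)"] cols[OF j] by simp
  also have "(\<Sum>l<N. ?d j l * M$$(i,l)) = \<kappa> - M$$(i,j)" using sum_skip[OF j, of "\<lambda>l. M$$(i,l)"] rows[OF i] by simp
  also have "(\<Sum>l<N. M$$(i,l) * M$$(l,j)) = (M*M)$$(i,j)"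
    using M i j by (simp add: scalar_prod_def atLeast0LessThan)
  also have "(\<Sum>l<N. ?d i l * ?d l j) = (\<Sum>l<N. ?d l j) - ?d i j" using sum_skip[OF i, of "\<lambda>l. ?d l j"] by simp
  also have "(\<Sum>l<N. ?d l j) = real N - 1"
    using sum_skip[OF j, of "\<lambda>l. 1"] j by (simp add: eq_commute[of _ j])
  finally have F: "(B*B)$$(i,j) = real N - 1 - (if i = j then 0 else 1) - (\<kappa> - M$$(i,j)) - (\<kappa> - M$$(i,j)) + (M*M)$$(i,j)" .
  show ?thesis
  proof (cases "i = j")
    case True
    then show ?thesis using F sq[OF i j] Bij[OF i j] diag[OF i] by (simp add: algebra_simps)
  next
    case False
    have Mij: "M$$(i,j) = 1 - B$$(i,j)" using Bij[OF i j] False by simp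
    show ?thesis using F sq[OF i j] False unfolding Mij by (simp add: algebra_simps)
  qed
qed

lemma adj_entry: "i < N \<Longrightarrow> j < N \<Longrightarrow> adj_matrix N E $$ (i,j) = (if E i j then 1 else 0)"
  unfolding adj_matrix_def by simp

lemma adj_carrier: "adj_matrix N E \<in> carrier_mat N N"
  unfolding adj_matrix_def by simp

lemma srg_matrix:
  assumes srg: "strongly_regular {0..<N} E n k e d"
  defines "A \<equiv> adj_matrix N E"
  shows "\<And>i j. i<N \<Longrightarrow> j<N \<Longrightarrow> (A*A)$$(i,j) = (if i=j then real k - real d else 0) + (real e - real d) * A$$(i,j) + real d"
    and "\<And>j. j<N \<Longrightarrow> (\<Sum>i<N. A$$(i,j)) = real k"
    and "\<And>i. i<N \<Longrightarrow> (\<Sum>j<N. A$$(i,j)) = real k"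
    and "\<And>i. i<N \<Longrightarrow> A$$(i,i) = 0"
proof -
  have sg: "simple_graph_on {0..<N} E" and deg: "\<And>x. x<N \<Longrightarrow> card {z\<in>{0..<N}. E x z} = k"
    and ee: "\<And>x y. x<N \<Longrightarrow> y<N \<Longrightarrow> E x y \<Longrightarrow> card {z\<in>{0..<N}. E x z \<and> E y z} = e"
    and dd: "\<And>x y. x<N \<Longrightarrow> y<N \<Longrightarrow> x \<noteq> y \<Longrightarrow> \<not> E x y \<Longrightarrow> card {z\<in>{0..<N}. E x z \<and> E y z} = d"
    using srg unfolding strongly_regular_def by auto
  have sym: "E x y \<Longrightarrow> E y x" and irr: "\<not> E x x" for x y using sg unfolding simple_graph_on_def by auto
  have Aij: "A$$(i,j) = (if E i j then 1 else 0)" if "i<N" "j<N" for i j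
    using that unfolding A_def by (rule adj_entry)
  show diag: "A$$(i,i) = 0" if "i<N" for i using Aij[OF that that] irr by simp
  show rows: "(\<Sum>j<N. A$$(i,j)) = real k" if i: "i<N" for i
  proof -
    have "(\<Sum>j<N. A$$(i,j)) = (\<Sum>j<N. if E i j then 1 else 0)" by (rule sum.cong) (auto simp: Aij i)
    also have "\<dots> = real (card {l. l < N \<and> E i l})" by (rule sum_indicator_card)
    also have "{l. l < N \<and> E i l} = {z\<in>{0..<N}. E i z}" by auto
    finally show ?thesis using deg[OF i] by simp
  qed
  show "(\<Sum>i<N. A$$(i,j)) = real k" if j: "j<N" for j
  proof -
    have "(\<Sum>i<N. A$$(i,j)) = (\<Sum>i<N. A$$(j,i))" by (rule sum.cong) (auto simp: Aij j intro: sym)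
    then show ?thesis using rows[OF j] by simp
  qed
  show "(A*A)$$(i,j) = (if i=j then real k - real d else 0) + (real e - real d) * A$$(i,j) + real d"
    if i: "i<N" and j: "j<N" for i j
  proof -
    have "(A*A)$$(i,j) = (\<Sum>l<N. A$$(i,l) * A$$(l,j))"
      using i j unfolding A_def by (simp add: adj_matrix_def scalar_prod_def atLeast0LessThan)
    also have "\<dots> = (\<Sum>l<N. if E i l \<and> E j l then 1 else 0)"
      by (rule sum.cong) (auto simp: Aij i j intro: sym)
    also have "\<dots> = real (card {l. l < N \<and> (E i l \<and> E j l)})" by (rule sum_indicator_card)
    also have "{l. l < N \<and> (E i l \<and> E j l)} = {z\<in>{0..<N}. E i z \<and> E j z}" by auto
    finally have c: "(A*A)$$(i,j) = real (card {z\<in>{0..<N}. E i z \<and> E j z})" .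
    show ?thesis
    proof (cases "i = j")
      case True then show ?thesis using c deg[OF i] Aij[OF i j] irr by simp
    next
      case False
      show ?thesis
      proof (cases "E i j")
        case True then show ?thesis using c ee[OF i j] Aij[OF i j] False by simp
      next
        case nE: False then show ?thesis using c dd[OF i j] Aij[OF i j] False by simp
      qed
    qed
  qed
qed

lemma compl_entry:
  assumes "i < N" "j < N" and irr: "\<And>x. \<not> E x x"
  shows "adj_matrix N (complement_graph {0..<N} E) $$ (i,j) = (if i = j then 0 else 1) - adj_matrix N E $$ (i,j)"
  using assms irr adj_entry[OF assms(1,2), of E] adj_entry[OF assms(1,2), of "complement_graph {0..<N} E"]
  unfolding complement_graph_def by auto

lemma energy_eq_arith:
  fixes N m k K r :: real
  assumes N: "N > 0" and m: "m > 0" and r: "r \<ge> 0" and k: "k \<ge> 0" and K: "K \<ge> 0"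
  shows "(2*m*N*k*(1+r)/((m+k)*(m+r)) = 2*(1+r)*N*K*m/((1+r+K)*(r+m))) \<longleftrightarrow> k*(1+r) = K*m"
proof -
  define c where "c = 2*m*N*(1+r)/(m+r)"
  have c0: "c > 0" unfolding c_def using N m r by (intro divide_pos_pos mult_pos_pos) auto
  have d1: "m + k > 0" "1 + r + K > 0" using m k r K by auto
  have L: "2*m*N*k*(1+r)/((m+k)*(m+r)) = c * (k/(m+k))" unfolding c_def by (simp add: field_simps)
  have R: "2*(1+r)*N*K*m/((1+r+K)*(r+m)) = c * (K/(1+r+K))" unfolding c_def by (simp add: field_simps)
  have "(c * (k/(m+k)) = c * (K/(1+r+K))) \<longleftrightarrow> k/(m+k) = K/(1+r+K)"
    using c0 mult_left_cancel[of c "k/(m+k)" "K/(1+r+K)"] by linarith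
  also have "\<dots> \<longleftrightarrow> k*(1+r+K) = K*(m+k)" using d1 by (simp add: field_simps)
  also have "\<dots> \<longleftrightarrow> k*(1+r) = K*m" by (simp add: algebra_simps)
  finally show ?thesis unfolding L R .
qed

lemma srg_row_identity:
  assumes srg: "strongly_regular {0..<N} E n k e d" and i: "i < N"
  shows "real k * real k = real k - real d + (real e - real d) * real k + real d * real N"
proof -
  let ?A = "adj_matrix N E"
  note F = srg_matrix[OF srg]
  have A: "?A \<in> carrier_mat N N" by (rule adj_carrier)
  have "(\<Sum>j<N. (?A*?A)$$(i,j)) = (\<Sum>j<N. \<Sum>l<N. ?A$$(i,l) * ?A$$(l,j))"
    by (rule sum.cong) (use A i in \<open>auto simp: scalar_prod_def atLeast0LessThan\<close>)
  also have "\<dots> = (\<Sum>l<N. ?A$$(i,l) * (\<Sum>j<N. ?A$$(l,j)))"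
    by (subst sum.swap) (simp add: sum_distrib_left)
  also have "\<dots> = (\<Sum>l<N. ?A$$(i,l) * real k)" by (rule sum.cong) (auto simp: F(3))
  also have "\<dots> = real k * real k" by (simp add: sum_distrib_right[symmetric] F(3)[OF i])
  finally have 1: "(\<Sum>j<N. (?A*?A)$$(i,j)) = real k * real k" .
  have "(\<Sum>j<N. (?A*?A)$$(i,j)) = (\<Sum>j<N. (if i=j then real k - real d else 0) + (real e - real d) * ?A$$(i,j) + real d)"
    by (rule sum.cong) (auto simp: F(1) i)
  also have "\<dots> = real k - real d + (real e - real d) * real k + real d * real N"
    using i by (simp add: sum.distrib sum_distrib_left[symmetric] F(3))
  finally show ?thesis using 1 by simp
qed

lemma srg_energy:
  assumes srg: "strongly_regular {0..<N} E n k e d"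
  and sm: "smallest_eigenvalue N E = - real m" and m: "m \<ge> 1"
  shows "\<exists>r::real. r \<ge> 0 \<and>
     real k * (real m - 1) * (1 + r) = (real k - real m * r) * (real N - real k - 1) \<and>
     (energy N E = energy N (complement_graph {0..<N} E) \<longleftrightarrow>
        real k * (1 + r) = (real N - real k - 1) * real m)"
proof -
  have sg: "simple_graph_on {0..<N} E" and cardV: "card {0..<N} = n"
    and nc: "\<exists>x\<in>{0..<N}. \<exists>y\<in>{0..<N}. x \<noteq> y \<and> \<not> E x y"
    and deg: "\<And>x. x\<in>{0..<N} \<Longrightarrow> card {z\<in>{0..<N}. E x z} = k"
    and dd: "\<And>x y. x\<in>{0..<N} \<Longrightarrow> y\<in>{0..<N} \<Longrightarrow> x \<noteq> y \<Longrightarrow> \<not> E x y \<Longrightarrow> card {z\<in>{0..<N}. E x z \<and> E y z} = d"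
    using srg unfolding strongly_regular_def by auto
  have irr: "\<And>x. \<not> E x x" using sg unfolding simple_graph_on_def by auto
  from nc obtain x y where x: "x < N" and y: "y < N" and xy: "x \<noteq> y" "\<not> E x y" by auto
  have N0: "N > 0" using x by simp
  have dk: "d \<le> k"
  proof -
    have "d = card {z\<in>{0..<N}. E x z \<and> E y z}" using dd[of x y] x y xy by auto
    also have "\<dots> \<le> card {z\<in>{0..<N}. E x z}" by (rule card_mono) auto
    also have "\<dots> = k" using deg x by auto
    finally show ?thesis .
  qed
  have kN: "k + 1 \<le> N"
  proof -
    have "{z\<in>{0..<N}. E x z} \<subseteq> {0..<N} - {x}" using irr by auto
    then have "card {z\<in>{0..<N}. E x z} \<le> card ({0..<N} - {x})" by (intro card_mono) auto
    then show ?thesis using deg[of x] x by simp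
  qed
  let ?A = "adj_matrix N E"
  let ?B = "adj_matrix N (complement_graph {0..<N} E)"
  note F = srg_matrix[OF srg]
  have A: "?A \<in> carrier_mat N N" and B: "?B \<in> carrier_mat N N" by (rule adj_carrier)+
  have disc: "(real e - real d)^2 + 4 * (real k - real d) \<ge> 0" using dk by simp
  from spectral[OF A F(1) F(2) F(4) disc]
  obtain as where cpA: "char_poly ?A = (\<Prod>a\<leftarrow>as. [:-a,1:])" and lenA: "length as = N"
    and valsA: "\<forall>a\<in>set as. a = real k \<or> a^2 - (real e - real d)*a - (real k - real d) = 0"
    and s1A: "sum_list as = 0" and s2A: "sum_list (map (\<lambda>a. a^2) as) = N * (real k - real d + real d)"
    by blast
  note eA = energy_from_factor[OF cpA]
  have ne: "set as \<noteq> {}" using lenA N0 by auto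
  have "Min (set as) = - real m" using sm unfolding smallest_eigenvalue_def eA(1) .
  then have mA: "- real m \<in> set as" using Min_in[OF _ ne] by fastforce
  have qm: "real m ^2 + (real e - real d) * real m - (real k - real d) = 0"
    using valsA mA m by fastforce
  define r where "r = real e - real d + real m"
  have kd: "real k - real d = real m * r" using qm unfolding r_def by (simp add: algebra_simps power2_eq_square)
  have r0: "r \<ge> 0"
  proof -
    have "real m * r \<ge> 0" using kd dk by simp
    then show ?thesis using m by (simp add: zero_le_mult_iff)
  qed
  have valsA': "\<forall>a\<in>set as. a = real k \<or> a = r \<or> a = - real m"
  proof
    fix a assume "a \<in> set as"
    then have "a = real k \<or> a^2 - (real e - real d)*a - (real k - real d) = 0" using valsA by auto
    moreover have "a^2 - (real e - real d)*a - (real k - real d) = (a - r) * (a + real m)"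
      unfolding kd r_def by (simp add: algebra_simps power2_eq_square)
    ultimately show "a = real k \<or> a = r \<or> a = - real m" by auto
  qed
  have EA: "energy N E = 2*real m*N*real k*(1+r)/((real m+real k)*(real m+r))"
  proof -
    have "energy N E = - 2 * (- real m) * (N * real k * (1 + r)) / ((- real m - real k)*(- real m - r))"
      unfolding eA(2) by (rule energy_alg[OF valsA']) (use m r0 s1A s2A lenA in auto)
    also have "\<dots> = 2*real m*N*real k*(1+r)/((real m+real k)*(real m+r))"
      by (simp add: algebra_simps)
    finally show ?thesis .
  qed
  have Bij: "\<And>i j. i<N \<Longrightarrow> j<N \<Longrightarrow> ?B$$(i,j) = (if i=j then 0 else 1) - ?A$$(i,j)"
    using compl_entry irr by blast
  have sqB: "\<And>i j. i<N \<Longrightarrow> j<N \<Longrightarrow> (?B*?B)$$(i,j) =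
      (if i=j then (real k - real d) - (real e - real d) - 1 else 0) + (-(2+(real e - real d))) * ?B$$(i,j)
      + (N - 2*real k + real d + (real e - real d))"
    by (rule complement_sq[OF A B Bij F(1) F(3) F(2) F(4)])
  have colsB: "(\<Sum>i<N. ?B$$(i,j)) = real N - 1 - real k" if j: "j < N" for j
  proof -
    have "(\<Sum>i<N. ?B$$(i,j)) = (\<Sum>i<N. (if j = i then 0 else 1) * 1 - ?A$$(i,j))"
      by (rule sum.cong) (auto simp: Bij j)
    also have "\<dots> = (\<Sum>i<N. (if j = i then 0 else 1) * 1) - real k"
      by (simp add: sum_subtractf F(2)[OF j])
    also have "(\<Sum>i<N. (if j = i then 0 else 1) * (1::real)) = real N - 1"
      using sum_skip[OF j, of "\<lambda>_. 1"] by simp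
    finally show ?thesis by simp
  qed
  have diagB: "?B$$(i,i) = 0" if "i < N" for i using Bij[OF that that] F(4)[OF that] by simp
  have discB: "(-(2+(real e - real d)))^2 + 4 * ((real k - real d) - (real e - real d) - 1) \<ge> 0"
    using disc by (simp add: algebra_simps power2_eq_square)
  from spectral[OF B sqB colsB diagB discB]
  obtain bs where cpB: "char_poly ?B = (\<Prod>a\<leftarrow>bs. [:-a,1:])" and lenB: "length bs = N"
    and valsB: "\<forall>a\<in>set bs. a = real N - 1 - real k \<or>
       a^2 - (-(2+(real e - real d)))*a - ((real k - real d) - (real e - real d) - 1) = 0"
    and s1B: "sum_list bs = 0" and s2B: "sum_list (map (\<lambda>a. a^2) bs) =
       N * (((real k - real d) - (real e - real d) - 1) + (N - 2*real k + real d + (real e - real d)))"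
    by blast
  note eB = energy_from_factor[OF cpB]
  have valsB': "\<forall>a\<in>set bs. a = real N - real k - 1 \<or> a = real m - 1 \<or> a = - 1 - r"
  proof
    fix a assume "a \<in> set bs"
    then have "a = real N - 1 - real k \<or> a^2 - (-(2+(real e - real d)))*a - ((real k - real d) - (real e - real d) - 1) = 0"
      using valsB by auto
    moreover have "a^2 - (-(2+(real e - real d)))*a - ((real k - real d) - (real e - real d) - 1) = (a - (real m - 1)) * (a - (- 1 - r))"
      unfolding kd r_def by (simp add: algebra_simps power2_eq_square)
    ultimately show "a = real N - real k - 1 \<or> a = real m - 1 \<or> a = - 1 - r" by auto
  qed
  have s2B': "sum_list (map (\<lambda>a. a^2) bs) = N * (real N - real k - 1)"
    using s2B by (simp add: algebra_simps)
  have EB: "energy N (complement_graph {0..<N} E) = 2*(1+r)*N*(real N - real k - 1)*real m/((1+r+(real N - real k - 1))*(r+real m))"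
  proof -
    have "energy N (complement_graph {0..<N} E) = - 2 * (- 1 - r) * (N * (real N - real k - 1) * (1 + (real m - 1)))
        / ((- 1 - r - (real N - real k - 1))*(- 1 - r - (real m - 1)))"
      unfolding eB(2) by (rule energy_alg[OF valsB']) (use m r0 s1B s2B' lenB kN in auto)
    also have "\<dots> = 2*(1+r)*N*(real N - real k - 1)*real m/((1+r+(real N - real k - 1))*(r+real m))"
      by (simp add: algebra_simps)
    finally show ?thesis .
  qed
  have ident: "real k * (real m - 1) * (1 + r) = (real k - real m * r) * (real N - real k - 1)"
  proof -
    have id0: "real k * real k = real k - real d + (real e - real d) * real k + real d * real N"
      by (rule srg_row_identity[OF srg x])
    have e_eq: "real e = real d + r - real m" unfolding r_def by simp
    have d_eq: "real d = real k - real m * r" using kd by simp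
    show ?thesis using id0 unfolding e_eq unfolding d_eq by (simp add: algebra_simps)
  qed
  have eqv: "energy N E = energy N (complement_graph {0..<N} E) \<longleftrightarrow>
        real k * (1 + r) = (real N - real k - 1) * real m"
    unfolding EA EB by (rule energy_eq_arith) (use N0 m r0 kN in auto)
  show ?thesis using r0 ident eqv by blast
qed

lemma alg_multi:
  fixes a m N k r :: real
  assumes a: "a \<ge> 2" and m: "m \<ge> 2" and N: "N = a*m" and k: "k = (a-1)*m"
  and ident: "k * (m - 1) * (1 + r) = (k - m * r) * (N - k - 1)"
  shows "k * (1 + r) = (N - k - 1) * m \<longleftrightarrow> a = m"
proof -
  have K: "N - k - 1 = m - 1" unfolding N k by (simp add: algebra_simps)
  have "(m*(m-1)) * ((a-1)*(1+r)) = (m*(m-1)) * ((a-1) - r)"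
    using ident unfolding K unfolding k by (simp add: algebra_simps)
  moreover have "m*(m-1) \<noteq> 0" using m by simp
  ultimately have "(a-1)*(1+r) = (a-1) - r" by simp
  then have "a * r = 0" by (simp add: algebra_simps)
  then have r0: "r = 0" using a by simp
  have "k * (1 + r) = (N - k - 1) * m \<longleftrightarrow> m * (a - 1) = m * (m - 1)"
    unfolding K unfolding r0 k by (simp add: algebra_simps)
  also have "\<dots> \<longleftrightarrow> a = m" using m by simp
  finally show ?thesis .
qed

lemma alg_LS:
  fixes n m N k r :: real
  assumes m: "m \<ge> 2" and N: "N = n^2" and k: "k = m*(n-1)" and k1: "k \<ge> 1"
  and ident: "k * (m - 1) * (1 + r) = (k - m * r) * (N - k - 1)"
  shows "k * (1 + r) = (N - k - 1) * m"
proof -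
  have K: "N - k - 1 = (n-1)*(n+1-m)" unfolding N k by (simp add: algebra_simps power2_eq_square)
  have n1: "n - 1 > 0" using k1 m k by (smt (verit) mult_nonneg_nonpos)
  have "(m*(n-1)) * ((m-1)*(1+r)) = (m*(n-1)) * ((n-1-r)*(n+1-m))"
    using ident unfolding K unfolding k by (simp add: algebra_simps)
  moreover have "m*(n-1) \<noteq> 0" using m n1 by simp
  ultimately have "(m-1)*(1+r) = (n-1-r)*(n+1-m)" by simp
  then have "r * n = n * (n - m)" by (simp add: algebra_simps)
  then have r: "r = n - m" using n1 by simp
  show ?thesis unfolding K unfolding k r by (simp add: algebra_simps)
qed

lemma alg_steiner:
  fixes n m N k r :: real
  assumes m: "m \<ge> 2" and N: "N * m = (m*n+m-n)*(n+1)" and k: "k = m*n" and k1: "k \<ge> 1"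
  and r0: "r \<ge> 0"
  and ident: "k * (m - 1) * (1 + r) = (k - m * r) * (N - k - 1)"
  shows "k * (1 + r) \<noteq> (N - k - 1) * m"
proof
  assume eq: "k * (1 + r) = (N - k - 1) * m"
  have n0: "n > 0" using k1 m k by (smt (verit) mult_nonneg_nonpos)
  have "m * (N - k - 1) = m * (n * (1 + r))" using eq k by (simp add: algebra_simps)
  then have K: "N - k - 1 = n * (1 + r)" using m by simp
  have "(m*n*(1+r)) * (m - 1) = (m*n*(1+r)) * (n - r)"
    using ident unfolding K unfolding k by (simp add: algebra_simps)
  moreover have "m*n*(1+r) \<noteq> 0" using m n0 r0 by simp
  ultimately have "m - 1 = n - r" by simp
  then have r: "r = n - m + 1" by simp
  have "N = n*(n - m + 2) + m*n + 1" using K k r by (simp add: algebra_simps)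
  then have "N = (n+1)^2" by (simp add: algebra_simps power2_eq_square)
  with N have "(n+1) * ((n+1)*m) = (n+1) * (m*n+m-n)" by (simp add: algebra_simps power2_eq_square)
  then have "(n+1)*m = m*n+m-n" using n0 by simp
  then have "n = 0" by (simp add: algebra_simps)
  with n0 show False by simp
qed

lemma iso_params:
  assumes iso: "graph_iso {0..<N} E W F" and srg: "strongly_regular {0..<N} E n k e d"
  shows "card W = N" "\<And>w. w \<in> W \<Longrightarrow> card {z\<in>W. F w z} = k"
proof -
  from iso obtain f where bij: "bij_betw f {0..<N} W" and hom: "\<forall>x\<in>{0..<N}. \<forall>y\<in>{0..<N}. E x y \<longleftrightarrow> F (f x) (f y)"
    unfolding graph_iso_def by blast
  have deg: "\<And>x. x\<in>{0..<N} \<Longrightarrow> card {z\<in>{0..<N}. E x z} = k"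
    using srg unfolding strongly_regular_def by auto
  show "card W = N" using bij_betw_same_card[OF bij] by simp
  fix w assume w: "w \<in> W"
  then obtain x where x: "x \<in> {0..<N}" and wx: "w = f x" using bij unfolding bij_betw_def by auto
  have inj: "inj_on f {0..<N}" using bij unfolding bij_betw_def by auto
  have "f ` {z\<in>{0..<N}. E x z} = {z\<in>W. F w z}"
  proof
    show "f ` {z\<in>{0..<N}. E x z} \<subseteq> {z\<in>W. F w z}" using hom x bij wx unfolding bij_betw_def by auto
    show "{z\<in>W. F w z} \<subseteq> f ` {z\<in>{0..<N}. E x z}"
    proof
      fix z assume z: "z \<in> {z\<in>W. F w z}"
      then obtain y where y: "y \<in> {0..<N}" "z = f y" using bij unfolding bij_betw_def by auto
      then have "E x y" using hom x z wx by auto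
      then show "z \<in> f ` {z\<in>{0..<N}. E x z}" using y by auto
    qed
  qed
  moreover have "card (f ` {z\<in>{0..<N}. E x z}) = card {z\<in>{0..<N}. E x z}"
    by (rule card_image) (rule inj_on_subset[OF inj], auto)
  ultimately show "card {z\<in>W. F w z} = k" using deg[OF x] by simp
qed

lemma multi_params:
  shows "card (multipartite_V a m) = a * m"
    and "w \<in> multipartite_V a m \<Longrightarrow> card {z\<in>multipartite_V a m. multipartite_E a m w z} = (a - 1) * m"
proof -
  show "card (multipartite_V a m) = a * m" unfolding multipartite_V_def by simp
  assume w: "w \<in> multipartite_V a m"
  have "{z\<in>multipartite_V a m. multipartite_E a m w z} = ({0..<a} - {fst w}) \<times> {0..<m}"
    using w unfolding multipartite_E_def multipartite_V_def by auto
  moreover have "card (({0..<a} - {fst w}) \<times> {0..<m}) = (a - 1) * m"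
    using w unfolding multipartite_V_def by (auto simp: card_cartesian_product)
  ultimately show "card {z\<in>multipartite_V a m. multipartite_E a m w z} = (a - 1) * m" by simp
qed

lemma card_filter_sum: "finite A \<Longrightarrow> card {x\<in>A. P x} = (\<Sum>x\<in>A. if P x then 1 else (0::nat))"
  by (simp add: sum.inter_filter[symmetric])

lemma LS_params:
  assumes oa: "orthogonal_array n m A" and m: "m \<ge> 2" and c: "c \<in> LS_V n"
  shows "card {z\<in>LS_V n. LS_E n m A c z} = m * (n - 1)"
proof -
  have oa1: "\<And>i c. i<m \<Longrightarrow> c<n^2 \<Longrightarrow> A i c < n"
    and oa2: "\<And>i j s t. i<m \<Longrightarrow> j<m \<Longrightarrow> i \<noteq> j \<Longrightarrow> s<n \<Longrightarrow> t<n \<Longrightarrow>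
        card {c. c < n^2 \<and> A i c = s \<and> A j c = t} = 1"
    using oa unfolding orthogonal_array_def by auto
  have c': "c < n^2" using c unfolding LS_V_def by auto
  have U: "z = c" if "i<m" "j<m" "i \<noteq> j" "z < n^2" "A i z = A i c" "A j z = A j c" for i j z
  proof -
    have "card {c'. c' < n^2 \<and> A i c' = A i c \<and> A j c' = A j c} = 1"
      using oa2[OF that(1-3) oa1[OF that(1) c'] oa1[OF that(2) c']] .
    then obtain w where w: "{c'. c' < n^2 \<and> A i c' = A i c \<and> A j c' = A j c} = {w}"
      using card_1_singletonE by blast
    have "z \<in> {w}" "c \<in> {w}" using that c' unfolding w[symmetric] by auto
    then show ?thesis by simp
  qed
  have R: "card {c'. c' < n^2 \<and> A i c' = s} = n" if i: "i<m" and s: "s<n" for i s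
  proof -
    define j where "j = (if i = 0 then 1 else 0::nat)"
    have j: "j < m" "j \<noteq> i" using m unfolding j_def by auto
    have eq: "{c'. c' < n^2 \<and> A i c' = s} = (\<Union>t\<in>{..<n}. {c'. c' < n^2 \<and> A i c' = s \<and> A j c' = t})"
      using oa1[OF j(1)] by auto
    have "card (\<Union>t\<in>{..<n}. {c'. c' < n^2 \<and> A i c' = s \<and> A j c' = t}) =
        (\<Sum>t\<in>{..<n}. card {c'. c' < n^2 \<and> A i c' = s \<and> A j c' = t})"
      by (rule card_UN_disjoint) auto
    also have "\<dots> = (\<Sum>t\<in>{..<n}. 1)"
      by (rule sum.cong) (use oa2[OF i j(1)] j s in auto)
    finally show ?thesis using eq by simp
  qed
  define S where "S i = {c'. c' < n^2 \<and> A i c' = A i c} - {c}" for i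
  have cardS: "card (S i) = n - 1" if i: "i < m" for i
    unfolding S_def using R[OF i oa1[OF i c']] c' by (subst card_Diff_singleton) auto
  have nb: "{z\<in>LS_V n. LS_E n m A c z} = (\<Union>i\<in>{..<m}. S i)"
  proof
    show "{z\<in>LS_V n. LS_E n m A c z} \<subseteq> (\<Union>i\<in>{..<m}. S i)"
    proof
      fix z assume "z \<in> {z\<in>LS_V n. LS_E n m A c z}"
      then have z: "z < n^2" "z \<noteq> c" and cd: "card {i. i < m \<and> A i c = A i z} = 1"
        unfolding LS_E_def LS_V_def by auto
      from cd obtain i where "i \<in> {i. i < m \<and> A i c = A i z}" by (metis card_1_singletonE insertI1)
      then show "z \<in> (\<Union>i\<in>{..<m}. S i)" using z unfolding S_def by (intro UN_I[of i]) auto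
    qed
    show "(\<Union>i\<in>{..<m}. S i) \<subseteq> {z\<in>LS_V n. LS_E n m A c z}"
    proof
      fix z assume "z \<in> (\<Union>i\<in>{..<m}. S i)"
      then obtain i where i: "i < m" and z: "z < n^2" "z \<noteq> c" "A i z = A i c" unfolding S_def by auto
      have "{i'. i' < m \<and> A i' c = A i' z} = {i}"
        using U[OF i _ _ z(1) z(3)] z(2) i z(3) by fastforce
      then show "z \<in> {z\<in>LS_V n. LS_E n m A c z}" using z c' unfolding LS_E_def LS_V_def by auto
    qed
  qed
  have "card (\<Union>i\<in>{..<m}. S i) = (\<Sum>i\<in>{..<m}. card (S i))"
  proof (rule card_UN_disjoint)
    show "\<forall>i\<in>{..<m}. finite (S i)" unfolding S_def by auto
    show "\<forall>i\<in>{..<m}. \<forall>j\<in>{..<m}. i \<noteq> j \<longrightarrow> S i \<inter> S j = {}"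
      unfolding S_def using U by fastforce
  qed simp
  also have "\<dots> = m * (n - 1)" using cardS by simp
  finally show ?thesis unfolding nb .
qed

lemma steiner_params:
  assumes st: "steiner_2 m v B" and m: "m \<ge> 2" and v: "v = m*n + m - n"
  shows "card B * m = v * (n+1)" "\<And>b. b \<in> B \<Longrightarrow> card {z\<in>B. block_graph_E B b z} = m * n"
proof -
  have st1: "\<And>b. b\<in>B \<Longrightarrow> b \<subseteq> {0..<v} \<and> card b = m"
    and st2: "\<And>x y. x<v \<Longrightarrow> y<v \<Longrightarrow> x \<noteq> y \<Longrightarrow> card {b\<in>B. x \<in> b \<and> y \<in> b} = 1"
    using st unfolding steiner_2_def by auto
  have finB: "finite B"
    by (rule finite_subset[of B "Pow {0..<v}"]) (use st1 in auto)
  have U: "b = b'" if H: "b\<in>B" "b'\<in>B" "x \<in> b" "y \<in> b" "x \<in> b'" "y \<in> b'" "x \<noteq> y" for b b' x y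
  proof -
    have xy: "x < v" "y < v" using st1[OF H(1)] H(3,4) by auto
    obtain w where w: "{b\<in>B. x \<in> b \<and> y \<in> b} = {w}" using st2[OF xy H(7)] card_1_singletonE by blast
    have "b \<in> {w}" "b' \<in> {w}" using H unfolding w[symmetric] by auto
    then show ?thesis by simp
  qed
  have Ex: "\<exists>b\<in>B. x \<in> b \<and> y \<in> b" if H: "x<v" "y<v" "x\<noteq>y" for x y
  proof -
    obtain w where w: "{b\<in>B. x \<in> b \<and> y \<in> b} = {w}" using st2[OF H] card_1_singletonE by blast
    have "w \<in> {b\<in>B. x \<in> b \<and> y \<in> b}" unfolding w by simp
    then show ?thesis by blast
  qed
  define T where "T p = {b\<in>B. p \<in> b}" for p
  have finT: "finite (T p)" for p unfolding T_def using finB by simp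
  have cardT: "card (T p) = n + 1" if p: "p < v" for p
  proof -
    have eq: "{0..<v} - {p} = (\<Union>b\<in>T p. b - {p})"
    proof
      show "{0..<v} - {p} \<subseteq> (\<Union>b\<in>T p. b - {p})"
      proof
        fix q assume "q \<in> {0..<v} - {p}"
        then obtain b where "b \<in> B" "p \<in> b" "q \<in> b" "q \<noteq> p" using Ex[OF p, of q] by auto
        then show "q \<in> (\<Union>b\<in>T p. b - {p})" unfolding T_def by auto
      qed
      show "(\<Union>b\<in>T p. b - {p}) \<subseteq> {0..<v} - {p}" using st1 unfolding T_def by auto
    qed
    have "card (\<Union>b\<in>T p. b - {p}) = (\<Sum>b\<in>T p. card (b - {p}))"
    proof (rule card_UN_disjoint[OF finT])
      show "\<forall>b\<in>T p. finite (b - {p})" using st1 unfolding T_def by (auto intro: finite_subset)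
      show "\<forall>b\<in>T p. \<forall>b'\<in>T p. b \<noteq> b' \<longrightarrow> (b - {p}) \<inter> (b' - {p}) = {}"
      proof (intro ballI impI)
        fix b b' assume bb: "b \<in> T p" "b' \<in> T p" "b \<noteq> b'"
        show "(b - {p}) \<inter> (b' - {p}) = {}"
        proof (rule ccontr)
          assume "(b - {p}) \<inter> (b' - {p}) \<noteq> {}"
          then obtain q where "q \<in> b" "q \<in> b'" "q \<noteq> p" by auto
          then have "b = b'" using U[of b b' p q] bb unfolding T_def by auto
          with bb show False by simp
        qed
      qed
    qed
    also have "\<dots> = (\<Sum>b\<in>T p. m - 1)"
    proof (rule sum.cong)
      fix b assume "b \<in> T p"
      then have b: "b \<in> B" "p \<in> b" unfolding T_def by auto
      show "card (b - {p}) = m - 1" using card_Diff_singleton[OF b(2)] st1[OF b(1)] by simp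
    qed simp
    finally have c1: "card (\<Union>b\<in>T p. b - {p}) = card (T p) * (m - 1)" by simp
    have "card ({0..<v} - {p}) = v - 1" using p by simp
    then have "v - 1 = card (T p) * (m - 1)" using c1 unfolding eq by simp
    moreover have "v - 1 = (n + 1) * (m - 1)" using v m by (simp add: algebra_simps)
    ultimately have eq2: "card (T p) * (m - 1) = (n + 1) * (m - 1)" by simp
    have m1: "m - 1 \<noteq> 0" using m by simp
    show ?thesis using mult_right_cancel[OF m1] eq2 by blast
  qed
  have "(\<Sum>b\<in>B. card b) = (\<Sum>b\<in>B. \<Sum>p\<in>{0..<v}. if p \<in> b then 1 else (0::nat))"
  proof (rule sum.cong)
    fix b assume b: "b \<in> B"
    have "{p\<in>{0..<v}. p \<in> b} = b" using st1[OF b] by auto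
    then have "card b = card {p\<in>{0..<v}. p \<in> b}" by simp
    also have "\<dots> = (\<Sum>p\<in>{0..<v}. if p \<in> b then 1 else (0::nat))"
      by (rule card_filter_sum) simp
    finally show "card b = (\<Sum>p\<in>{0..<v}. if p \<in> b then 1 else (0::nat))" .
  qed simp
  also have "\<dots> = (\<Sum>p\<in>{0..<v}. \<Sum>b\<in>B. if p \<in> b then 1 else (0::nat))" by (rule sum.swap)
  also have "\<dots> = (\<Sum>p\<in>{0..<v}. card (T p))"
    by (rule sum.cong) (simp_all add: T_def card_filter_sum[OF finB])
  also have "\<dots> = v * (n + 1)" using cardT by simp
  finally have "(\<Sum>b\<in>B. card b) = v * (n + 1)" .
  moreover have "(\<Sum>b\<in>B. card b) = card B * m" using st1 by simp
  ultimately show "card B * m = v * (n+1)" by simp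
  fix b assume b: "b \<in> B"
  have nb: "{z\<in>B. block_graph_E B b z} = (\<Union>p\<in>b. T p - {b})"
    unfolding block_graph_E_def T_def using b by auto
  have finb: "finite b" by (rule finite_subset[of b "{0..<v}"]) (use st1[OF b] in auto)
  have "card (\<Union>p\<in>b. T p - {b}) = (\<Sum>p\<in>b. card (T p - {b}))"
  proof (rule card_UN_disjoint[OF finb])
    show "\<forall>p\<in>b. finite (T p - {b})" using finT by auto
    show "\<forall>p\<in>b. \<forall>q\<in>b. p \<noteq> q \<longrightarrow> (T p - {b}) \<inter> (T q - {b}) = {}"
    proof (intro ballI impI)
      fix p q assume pq: "p \<in> b" "q \<in> b" "p \<noteq> q"
      show "(T p - {b}) \<inter> (T q - {b}) = {}"
      proof (rule ccontr)
        assume "(T p - {b}) \<inter> (T q - {b}) \<noteq> {}"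
        then obtain z where z: "z \<in> B" "p \<in> z" "q \<in> z" "z \<noteq> b" unfolding T_def by auto
        have "b = z" by (rule U[OF b z(1) pq(1) pq(2) z(2) z(3) pq(3)])
        with z show False by simp
      qed
    qed
  qed
  also have "\<dots> = (\<Sum>p\<in>b. n)"
  proof (rule sum.cong)
    fix p assume p: "p \<in> b"
    have "p < v" using st1[OF b] p by auto
    then show "card (T p - {b}) = n" using cardT[of p] finT[of p] b p by (simp add: T_def)
  qed simp
  also have "\<dots> = m * n" using st1[OF b] by simp
  finally show "card {z\<in>B. block_graph_E B b z} = m * n" unfolding nb .
qed

theorem mainTheorem10:
  fixes N m :: nat and E :: "nat \<Rightarrow> nat \<Rightarrow> bool"
  assumes "m \<ge> 2"
    and "is_srg {0..<N} E"
    and "smallest_eigenvalue N E = - real m"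
    and "(\<exists>a\<ge>2. graph_iso {0..<N} E (multipartite_V a m) (multipartite_E a m))
       \<or> (\<exists>n A. orthogonal_array n m A \<and> graph_iso {0..<N} E (LS_V n) (LS_E n m A))
       \<or> (\<exists>n B. steiner_2 m (m * n + m - n) B \<and> graph_iso {0..<N} E B (block_graph_E B))"
  shows "energy N E = energy N (complement_graph {0..<N} E) \<longleftrightarrow>
           graph_iso {0..<N} E (multipartite_V m m) (multipartite_E m m)
         \<or> (\<exists>n\<ge>2. \<exists>A. orthogonal_array n m A \<and> graph_iso {0..<N} E (LS_V n) (LS_E n m A))"
proof -
  have m: "m \<ge> 2" by fact
  from assms(2) obtain n0 k e d where srg: "strongly_regular {0..<N} E n0 k e d"
    unfolding is_srg_def by blast
  from srg_energy[OF srg assms(3)] m obtain r where r0: "r \<ge> 0"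
    and ident: "real k * (real m - 1) * (1 + r) = (real k - real m * r) * (real N - real k - 1)"
    and eqv: "energy N E = energy N (complement_graph {0..<N} E) \<longleftrightarrow>
        real k * (1 + r) = (real N - real k - 1) * real m"
    by auto
  have sg: "simple_graph_on {0..<N} E"
    and nc: "\<exists>x\<in>{0..<N}. \<exists>y\<in>{0..<N}. x \<noteq> y \<and> \<not> E x y"
    and ed: "\<exists>x y. E x y"
    and deg: "\<And>x. x\<in>{0..<N} \<Longrightarrow> card {z\<in>{0..<N}. E x z} = k"
    using srg unfolding strongly_regular_def by auto
  from nc obtain x y where x: "x < N" and y: "y < N" and xy: "x \<noteq> y" by auto
  have N2: "N \<ge> 2" using x y xy by linarith
  have k1: "k \<ge> 1"
  proof -
    from ed obtain u w where uw: "E u w" by auto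
    then have u: "u < N" and w: "w < N" using sg unfolding simple_graph_on_def by auto
    have "w \<in> {z\<in>{0..<N}. E u z}" using uw w by auto
    moreover have "finite {z\<in>{0..<N}. E u z}" by simp
    ultimately have c: "card {z\<in>{0..<N}. E u z} \<noteq> 0" by (simp add: card_0_eq) blast
    have kc: "card {z\<in>{0..<N}. E u z} = k" using deg u by simp
    show ?thesis using c kc by linarith
  qed
  have multi: "energy N E = energy N (complement_graph {0..<N} E) \<longleftrightarrow> a = m"
    if a: "a \<ge> 2" and iso: "graph_iso {0..<N} E (multipartite_V a m) (multipartite_E a m)" for a
  proof -
    note P = iso_params[OF iso srg]
    have NN: "N = a * m" using P(1) multi_params(1) by simp
    have "multipartite_V a m \<noteq> {}" using NN a m unfolding multipartite_V_def by auto
    then obtain w where w: "w \<in> multipartite_V a m" by auto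
    have kk: "k = (a - 1) * m" using P(2)[OF w] multi_params(2)[OF w] by simp
    have "real k * (1 + r) = (real N - real k - 1) * real m \<longleftrightarrow> real a = real m"
      by (rule alg_multi[OF _ _ _ _ ident]) (use a m NN kk in \<open>auto simp: of_nat_diff\<close>)
    then show ?thesis using eqv by simp
  qed
  have LS: "energy N E = energy N (complement_graph {0..<N} E) \<and> n \<ge> 2"
    if oa: "orthogonal_array n m A" and iso: "graph_iso {0..<N} E (LS_V n) (LS_E n m A)" for n A
  proof -
    note P = iso_params[OF iso srg]
    have NN: "N = n^2" using P(1) unfolding LS_V_def by simp
    have n2: "n \<ge> 2"
    proof (rule ccontr)
      assume "\<not> n \<ge> 2" then have "n \<le> 1" by simp
      then have "n = 0 \<or> n = 1" by auto
      then have "n^2 \<le> 1" by auto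
      with NN N2 show False by simp
    qed
    have "0 \<in> LS_V n" using n2 unfolding LS_V_def by simp
    then have kk: "k = m * (n - 1)" using P(2)[of 0] LS_params[OF oa m, of 0] by simp
    have rk: "real k = real m * (real n - 1)" using kk n2 by (simp add: of_nat_diff)
    have rN: "real N = (real n)^2" using NN by simp
    have rk1: "real k \<ge> 1" using k1 by simp
    have rm: "real m \<ge> 2" using m by simp
    have "real k * (1 + r) = (real N - real k - 1) * real m"
      by (rule alg_LS[OF rm rN rk rk1 ident])
    then show ?thesis using eqv n2 by simp
  qed
  have ST: "energy N E \<noteq> energy N (complement_graph {0..<N} E)"
    if st: "steiner_2 m (m * n + m - n) B" and iso: "graph_iso {0..<N} E B (block_graph_E B)" for n B
  proof -
    note P = iso_params[OF iso srg]
    note Q = steiner_params[OF st m refl]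
    have NN: "N = card B" using P(1) by simp
    have "B \<noteq> {}" using NN N2 by auto
    then obtain b where b: "b \<in> B" by auto
    have kk: "k = m * n" using P(2)[OF b] Q(2)[OF b] by simp
    have v: "real (m * n + m - n) = real m * real n + real m - real n"
    proof -
      have "1 * n \<le> m * n" using m by (intro mult_le_mono1) simp
      then have "n \<le> m * n + m" by linarith
      then have "real (m * n + m - n) = real (m * n + m) - real n" by (rule of_nat_diff)
      then show ?thesis by simp
    qed
    have NB: "real N * real m = (real m * real n + real m - real n) * (real n + 1)"
    proof -
      have h: "real (card B) * real m = real (m*n+m-n) * (real n + 1)"
        using arg_cong[OF Q(1), of real] by (simp only: of_nat_mult of_nat_add of_nat_1)
      show ?thesis by (simp only: NN h v)
    qed
    have "real k * (1 + r) \<noteq> (real N - real k - 1) * real m"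
    proof (rule alg_steiner[OF _ NB _ _ r0 ident])
      show "real m \<ge> 2" using m by simp
      show rk: "real k = real m * real n" using kk by simp
      show "real k \<ge> 1" using k1 by simp
    qed
    then show ?thesis using eqv by simp
  qed
  show ?thesis
  proof
    assume eq: "energy N E = energy N (complement_graph {0..<N} E)"
    from assms(4) show "graph_iso {0..<N} E (multipartite_V m m) (multipartite_E m m)
         \<or> (\<exists>n\<ge>2. \<exists>A. orthogonal_array n m A \<and> graph_iso {0..<N} E (LS_V n) (LS_E n m A))"
    proof (elim disjE exE conjE)
      fix a assume "a \<ge> 2" "graph_iso {0..<N} E (multipartite_V a m) (multipartite_E a m)"
      with multi eq show ?thesis by auto
    next
      fix n A assume "orthogonal_array n m A" "graph_iso {0..<N} E (LS_V n) (LS_E n m A)"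
      with LS show ?thesis by blast
    next
      fix n B assume "steiner_2 m (m * n + m - n) B" "graph_iso {0..<N} E B (block_graph_E B)"
      with ST eq show ?thesis by blast
    qed
  next
    assume "graph_iso {0..<N} E (multipartite_V m m) (multipartite_E m m)
         \<or> (\<exists>n\<ge>2. \<exists>A. orthogonal_array n m A \<and> graph_iso {0..<N} E (LS_V n) (LS_E n m A))"
    then show "energy N E = energy N (complement_graph {0..<N} E)"
    proof (elim disjE exE conjE)
      assume "graph_iso {0..<N} E (multipartite_V m m) (multipartite_E m m)"
      with multi m show ?thesis by blast
    next
      fix n A assume "orthogonal_array n m A" "graph_iso {0..<N} E (LS_V n) (LS_E n m A)"
      with LS show ?thesis by blast
    qed
  qed
qed

end
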